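(* Let $\mathbb{X}$ be a real Banach space and let $f\in \mathbb{X}^{**}$ be weak$^*$ continuous. Let $\mathbb{Y}$ be a linear subspace of $\mathbb{X}^{**}$ such that each member of $\mathbb{Y}$ is weak$^*$ continuous and $f\notin \mathbb{Y}$. Suppose that $g_0\in \mathbb{Y}$ is a best approximation to $f$ out of $\mathbb{Y}$. Then for any finite-dimensional subspace $\mathbb{Z}$ of $\mathbb{Y}$ containing $g_0$, $$\|f-g_0\|=\mathrm{dist}(f,\mathbb{Y})=\max \Big\{ |f(x)|: x\in \bigcap_{g\in \mathbb{Z}}\mathcal{N}(g)\cap S_{\mathbb{X}^*}\Big\}.$$
   Context: A functional in $\mathbb{X}^{**}$ is weak$^*$ continuous iff it equals $\psi(x)$ for some $x\in\mathbb{X}$, $\psi$ the canonical embedding. $\mathcal{N}(h)=\{x^*\in\mathbb{X}^*:h(x^* )=0\}$; $S_{\mathbb{X}^*}$ is the unit sphere of $\mathbb{X}^*$; $\mathrm{dist}(f,\mathbb{Y})=\inf_{g\in\mathbb{Y}}\|f-g\|$, and $g_0$ is a best approximation if $\|f-g_0\|=\mathrm{dist}(f,\mathbb{Y})$. *)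

theory Defs
  imports "HOL-Analysis.Analysis"
begin

text \<open>The dual X* of a real Banach space X is modelled as the type of bounded linear
functionals 'a \<Rightarrow>L real; the bidual X** as ('a \<Rightarrow>L real) \<Rightarrow>L real.\<close>

definition weak_star_topology :: "('a::real_normed_vector \<Rightarrow>\<^sub>L real) topology" where
  "weak_star_topology =
     topology_generated_by {{l. blinfun_apply l x \<in> U} | x U. open U}"

definition weak_star_continuous :: "(('a::real_normed_vector \<Rightarrow>\<^sub>L real) \<Rightarrow>\<^sub>L real) \<Rightarrow> bool" where
  "weak_star_continuous h \<longleftrightarrow>
     continuous_map weak_star_topology euclideanreal (blinfun_apply h)"

end

theory Submission imports Defs begin

definition lin_graph :: "('a::real_vector \<times> real) set \<Rightarrow> bool" where
  "lin_graph G \<longleftrightarrow> (\<forall>x a y b. (x,a) \<in> G \<longrightarrow> (y,b) \<in> G \<longrightarrow> (x+y, a+b) \<in> G) \<and>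
                    (\<forall>x a c. (x,a) \<in> G \<longrightarrow> (c *\<^sub>R x, c*a) \<in> G)"

lemma hb_graph:
  fixes p :: "'a::real_vector \<Rightarrow> real" and G0 :: "('a \<times> real) set"
  assumes sub: "\<And>x y. p (x + y) \<le> p x + p y"
    and hom: "\<And>c x. c \<ge> 0 \<Longrightarrow> p (c *\<^sub>R x) = c * p x"
    and G0: "lin_graph G0" "(0,0) \<in> G0" "\<And>x a. (x,a) \<in> G0 \<Longrightarrow> a \<le> p x"
  shows "\<exists>l. linear l \<and> (\<forall>x. l x \<le> p x) \<and> (\<forall>x a. (x,a) \<in> G0 \<longrightarrow> l x = a)"
proof -
  define A where "A = {G. G0 \<subseteq> G \<and> lin_graph G \<and> (\<forall>x a. (x,a) \<in> G \<longrightarrow> a \<le> p x)}"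
  have "G0 \<in> A" using G0 unfolding A_def by auto
  have "\<exists>M\<in>A. \<forall>X\<in>A. M \<subseteq> X \<longrightarrow> X = M"
  proof (rule subset_Zorn_nonempty)
    show "A \<noteq> {}" using \<open>G0 \<in> A\<close> by auto
  next
    fix C assume "C \<noteq> {}" "subset.chain A C"
    then have CA: "C \<subseteq> A" and ch: "\<And>X Y. X \<in> C \<Longrightarrow> Y \<in> C \<Longrightarrow> X \<subseteq> Y \<or> Y \<subseteq> X"
      by (auto simp: subset_chain_def)
    have "G0 \<subseteq> \<Union>C"
    proof -
      obtain X where "X \<in> C" using \<open>C \<noteq> {}\<close> by blast
      then have "G0 \<subseteq> X" using CA unfolding A_def by blast
      then show ?thesis using \<open>X \<in> C\<close> by blast
    qed
    moreover have "lin_graph (\<Union>C)"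
      unfolding lin_graph_def
    proof (intro conjI allI impI)
      fix x a y b assume "(x,a) \<in> \<Union>C" "(y,b) \<in> \<Union>C"
      then obtain X Y where "X \<in> C" "Y \<in> C" "(x,a) \<in> X" "(y,b) \<in> Y" by auto
      then have "\<exists>W\<in>C. (x,a) \<in> W \<and> (y,b) \<in> W" using ch by blast
      then obtain W where "W \<in> C" "(x,a) \<in> W" "(y,b) \<in> W" by blast
      then have "lin_graph W" using CA unfolding A_def by auto
      then show "(x+y, a+b) \<in> \<Union>C" using \<open>W \<in> C\<close> \<open>(x,a) \<in> W\<close> \<open>(y,b) \<in> W\<close>
        unfolding lin_graph_def by blast
    next
      fix x a c assume "(x,a) \<in> \<Union>C"
      then obtain W where "W \<in> C" "(x,a) \<in> W" by auto
      then have "lin_graph W" using CA unfolding A_def by auto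
      then show "(c *\<^sub>R x, c*a) \<in> \<Union>C" using \<open>W \<in> C\<close> \<open>(x,a) \<in> W\<close>
        unfolding lin_graph_def by blast
    qed
    moreover have "\<forall>x a. (x,a) \<in> \<Union>C \<longrightarrow> a \<le> p x" using CA unfolding A_def by blast
    ultimately show "\<Union>C \<in> A" unfolding A_def by blast
  qed
  then obtain M where "M \<in> A" and max: "\<And>X. X \<in> A \<Longrightarrow> M \<subseteq> X \<Longrightarrow> X = M" by blast
  have G0M: "G0 \<subseteq> M" and lgM: "lin_graph M" and domM: "\<And>x a. (x,a) \<in> M \<Longrightarrow> a \<le> p x"
    using \<open>M \<in> A\<close> unfolding A_def by auto
  have addM: "\<And>x a y b. (x,a) \<in> M \<Longrightarrow> (y,b) \<in> M \<Longrightarrow> (x+y, a+b) \<in> M"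
    and scM: "\<And>x a c. (x,a) \<in> M \<Longrightarrow> (c *\<^sub>R x, c*a) \<in> M"
    using lgM unfolding lin_graph_def by blast+
  have p0: "p 0 = 0" using hom[of 0 0] by simp
  have funM: "a = b" if "(x,a) \<in> M" "(x,b) \<in> M" for x a b
  proof -
    have "(0, a - b) \<in> M" using addM[OF that(1) scM[OF that(2), of "-1"]] by simp
    moreover have "(0, b - a) \<in> M" using addM[OF that(2) scM[OF that(1), of "-1"]] by simp
    ultimately have "a - b \<le> 0" "b - a \<le> 0" using domM p0 by (metis)+
    then show ?thesis by simp
  qed
  have tot: "\<exists>a. (x,a) \<in> M" for x
  proof (rule ccontr)
    assume nx: "\<not> (\<exists>a. (x,a) \<in> M)"
    have key: "a - p (y - x) \<le> p (z + x) - b" if "(y,a) \<in> M" "(z,b) \<in> M" for y a z b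
    proof -
      have "a + b \<le> p (y + z)" using domM addM[OF that] by simp
      also have "p (y + z) = p ((y - x) + (z + x))" by (simp add: algebra_simps)
      also have "\<dots> \<le> p (y - x) + p (z + x)" by (rule sub)
      finally show ?thesis by simp
    qed
    define T where "T = {a - p (y - x) | y a. (y,a) \<in> M}"
    define c where "c = Sup T"
    have "(0,0) \<in> M" using G0 G0M by auto
    have Tne: "T \<noteq> {}" using \<open>(0,0) \<in> M\<close> unfolding T_def by blast
    have upper: "t \<le> p (z + x) - b" if "t \<in> T" "(z,b) \<in> M" for t z b
      using that key unfolding T_def by blast
    have bddT: "bdd_above T" using upper[OF _ \<open>(0,0) \<in> M\<close>] by (intro bdd_aboveI) auto
    have c1: "a - p (y - x) \<le> c" if "(y,a) \<in> M" for y a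
      unfolding c_def using that bddT by (intro cSup_upper) (auto simp: T_def)
    have c2: "c \<le> p (z + x) - b" if "(z,b) \<in> M" for z b
      unfolding c_def using Tne upper[OF _ that] by (intro cSup_least) auto
    define M' where "M' = {(y + t *\<^sub>R x, a + t * c) | y a t. (y,a) \<in> M}"
    have MM': "M \<subseteq> M'" unfolding M'_def by force
    have "M' \<in> A" unfolding A_def
    proof (intro CollectI conjI allI impI)
      show "G0 \<subseteq> M'" using G0M MM' by blast
    next
      show "lin_graph M'" unfolding lin_graph_def
      proof (intro conjI allI impI)
        fix u a' v b' assume "(u,a') \<in> M'" "(v,b') \<in> M'"
        then obtain y a t z b s where "(y,a) \<in> M" "(z,b) \<in> M" "u = y + t *\<^sub>R x" "a' = a + t*c"
          "v = z + s *\<^sub>R x" "b' = b + s*c" unfolding M'_def by blast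
        moreover have "(y+z, a+b) \<in> M" using addM calculation by blast
        ultimately show "(u+v, a'+b') \<in> M'" unfolding M'_def
          by (intro CollectI exI[of _ "y+z"] exI[of _ "a+b"] exI[of _ "t+s"])
             (simp add: algebra_simps)
      next
        fix u a' k assume "(u,a') \<in> M'"
        then obtain y a t where "(y,a) \<in> M" "u = y + t *\<^sub>R x" "a' = a + t*c"
          unfolding M'_def by blast
        moreover have "(k *\<^sub>R y, k*a) \<in> M" using scM calculation by blast
        ultimately show "(k *\<^sub>R u, k*a') \<in> M'" unfolding M'_def
          by (intro CollectI exI[of _ "k *\<^sub>R y"] exI[of _ "k*a"] exI[of _ "k*t"])
             (simp add: algebra_simps)
      qed
    next
      fix u a' assume "(u,a') \<in> M'"
      then obtain y a t where ya: "(y,a) \<in> M" and u: "u = y + t *\<^sub>R x" and a': "a' = a + t*c"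
        unfolding M'_def by blast
      consider "t = 0" | "t > 0" | "t < 0" by linarith
      then show "a' \<le> p u"
      proof cases
        case 1 then show ?thesis using domM[OF ya] u a' by simp
      next
        case 2
        have "(inverse t *\<^sub>R y, inverse t * a) \<in> M" using scM[OF ya] .
        from c2[OF this] have "t * c \<le> t * (p (inverse t *\<^sub>R y + x) - inverse t * a)"
          using 2 by (simp add: mult_left_mono)
        also have "\<dots> = t * p (inverse t *\<^sub>R y + x) - a" using 2 by (simp add: algebra_simps)
        also have "t * p (inverse t *\<^sub>R y + x) = p (t *\<^sub>R (inverse t *\<^sub>R y + x))"
          using 2 hom by simp
        also have "t *\<^sub>R (inverse t *\<^sub>R y + x) = u" using 2 u by (simp add: algebra_simps)
        finally show ?thesis using a' by simp
      next
        case 3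
        define s where "s = - t"
        have s: "s > 0" using 3 s_def by simp
        have "(inverse s *\<^sub>R y, inverse s * a) \<in> M" using scM[OF ya] .
        from c1[OF this] have "s * (inverse s * a - p (inverse s *\<^sub>R y - x)) \<le> s * c"
          using s by (simp add: mult_left_mono)
        moreover have "s * (inverse s * a - p (inverse s *\<^sub>R y - x)) = a - s * p (inverse s *\<^sub>R y - x)"
          using s by (simp add: algebra_simps)
        moreover have "s * p (inverse s *\<^sub>R y - x) = p (s *\<^sub>R (inverse s *\<^sub>R y - x))"
          using s hom by simp
        moreover have "s *\<^sub>R (inverse s *\<^sub>R y - x) = u" using s u s_def by (simp add: algebra_simps)
        ultimately show ?thesis using a' s_def by simp
      qed
    qed
    then have "M' = M" using max MM' by blast
    moreover have "(x, c) \<in> M'" unfolding M'_def using \<open>(0,0) \<in> M\<close>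
      by (intro CollectI exI[of _ 0] exI[of _ 0] exI[of _ 1]) simp
    ultimately show False using nx by blast
  qed
  define l where "l x = (SOME a. (x,a) \<in> M)" for x
  have lM: "(x, l x) \<in> M" for x unfolding l_def using tot[of x] by (rule someI_ex)
  have "linear l"
  proof (rule linearI)
    fix x y show "l (x + y) = l x + l y" using funM[OF lM addM[OF lM lM]] by simp
  next
    fix r x show "l (r *\<^sub>R x) = r *\<^sub>R l x" using funM[OF lM scM[OF lM]] by simp
  qed
  moreover have "\<forall>x. l x \<le> p x" using domM lM by blast
  moreover have "\<forall>x a. (x,a) \<in> G0 \<longrightarrow> l x = a" using funM lM G0M by blast
  ultimately show ?thesis by blast
qed
lemma gen_nbhd:
  fixes V :: "('a::real_normed_vector \<Rightarrow>\<^sub>L real) set"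
  assumes "generate_topology_on {{l. blinfun_apply l x \<in> U} | x U. open U} V" and "l0 \<in> V"
  shows "\<exists>F e. finite F \<and> e > 0 \<and>
    (\<forall>l. (\<forall>x\<in>F. \<bar>blinfun_apply l x - blinfun_apply l0 x\<bar> < e) \<longrightarrow> l \<in> V)"
  using assms
proof (induction arbitrary: l0)
  case Empty then show ?case by simp
next
  case (Int a b)
  have "l0 \<in> a" "l0 \<in> b" using Int.prems by auto
  from Int.IH(1)[OF this(1)] obtain F1 e1 where 1: "finite F1" "e1 > 0"
    "\<forall>l. (\<forall>x\<in>F1. \<bar>blinfun_apply l x - blinfun_apply l0 x\<bar> < e1) \<longrightarrow> l \<in> a"
    by blast
  from Int.IH(2)[OF \<open>l0 \<in> b\<close>] obtain F2 e2 where 2: "finite F2" "e2 > 0"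
    "\<forall>l. (\<forall>x\<in>F2. \<bar>blinfun_apply l x - blinfun_apply l0 x\<bar> < e2) \<longrightarrow> l \<in> b"
    by blast
  show ?case
    by (rule exI[of _ "F1 \<union> F2"], rule exI[of _ "min e1 e2"]) (use 1 2 in auto)
next
  case (UN K)
  then obtain k where "k \<in> K" "l0 \<in> k" by auto
  with UN.IH[of k l0] show ?case by blast
next
  case (Basis s)
  then obtain x U where s: "s = {l. blinfun_apply l x \<in> U}" "open U" by auto
  then have "blinfun_apply l0 x \<in> U" using Basis by auto
  then obtain e where "e > 0" "\<And>y. dist y (blinfun_apply l0 x) < e \<Longrightarrow> y \<in> U"
    using \<open>open U\<close> open_dist by metis
  then show ?case
    by (intro exI[of _ "{x}"] exI[of _ e]) (auto simp: s dist_real_def)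
qed

lemma ker_span:
  fixes h :: "('a::real_normed_vector \<Rightarrow>\<^sub>L real) \<Rightarrow> real"
  assumes "finite F" "linear h" "\<And>l. (\<forall>x\<in>F. blinfun_apply l x = 0) \<Longrightarrow> h l = 0"
  shows "\<exists>y. \<forall>l. h l = blinfun_apply l y"
  using assms
proof (induction F arbitrary: h rule: finite_induct)
  case empty
  then show ?case by (intro exI[of _ 0]) auto
next
  case (insert a F)
  show ?case
  proof (cases "\<exists>l0. (\<forall>x\<in>F. blinfun_apply l0 x = (0::real)) \<and> blinfun_apply l0 a \<noteq> (0::real)")
    case True
    then obtain l0 where l0: "\<forall>x\<in>F. blinfun_apply l0 x = (0::real)" "blinfun_apply l0 a \<noteq> (0::real)" by blast
    define l1 where "l1 = (1 / blinfun_apply l0 a) *\<^sub>R l0"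
    have l1: "\<forall>x\<in>F. blinfun_apply l1 x = 0" "blinfun_apply l1 a = 1"
      using l0 by (auto simp: l1_def blinfun.scaleR_left)
    define h' where "h' l = h l - blinfun_apply l a * h l1" for l
    have "linear h'" unfolding h'_def
      by (rule linearI) (simp_all add: linear_add[OF insert.prems(1)] linear_scale[OF insert.prems(1)]
          blinfun.add_left blinfun.scaleR_left algebra_simps)
    moreover have "h' l = 0" if "\<forall>x\<in>F. blinfun_apply l x = 0" for l
    proof -
      have "h (l - blinfun_apply l a *\<^sub>R l1) = 0"
        using that l1 by (intro insert.prems(2)) (auto simp: blinfun.diff_left blinfun.scaleR_left)
      then show ?thesis unfolding h'_def
        by (simp add: linear_diff[OF insert.prems(1)] linear_scale[OF insert.prems(1)])
    qed
    ultimately obtain y' where y': "\<forall>l. h' l = blinfun_apply l y'" using insert.IH by blast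
    show ?thesis
    proof (intro exI allI)
      fix l
      have "h l = h' l + blinfun_apply l a * h l1" unfolding h'_def by simp
      also have "\<dots> = blinfun_apply l (y' + h l1 *\<^sub>R a)"
        using y' by (simp add: blinfun.add_right blinfun.scaleR_right)
      finally show "h l = blinfun_apply l (y' + h l1 *\<^sub>R a)" .
    qed
  next
    case False
    then have "h l = 0" if "\<forall>x\<in>F. blinfun_apply l x = 0" for l
      using that insert.prems(2) by auto
    then show ?thesis using insert.IH insert.prems(1) by blast
  qed
qed

lemma wsc_repr:
  fixes h :: "('a::real_normed_vector \<Rightarrow>\<^sub>L real) \<Rightarrow>\<^sub>L real"
  assumes "weak_star_continuous h"
  shows "\<exists>y. \<forall>l. blinfun_apply h l = blinfun_apply l y"
proof -
  define S :: "('a \<Rightarrow>\<^sub>L real) set set" where "S = {{l. blinfun_apply l x \<in> U} | x U. open U}"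
  have ws: "weak_star_topology = topology_generated_by S"
    unfolding weak_star_topology_def S_def ..
  define V where "V = {l \<in> topspace weak_star_topology. blinfun_apply h l \<in> ball 0 1}"
  have "openin weak_star_topology V"
    unfolding V_def using assms unfolding weak_star_continuous_def
    by (intro openin_continuous_map_preimage) auto
  then have gV: "generate_topology_on S V" unfolding ws by (rule openin_topology_generated_by)
  have "UNIV \<in> S" unfolding S_def by (intro CollectI exI[of _ 0] exI[of _ UNIV]) auto
  then have "(0::'a \<Rightarrow>\<^sub>L real) \<in> topspace weak_star_topology"
    unfolding ws topology_generated_by_topspace by blast
  then have "0 \<in> V" unfolding V_def by simp
  from gen_nbhd[OF gV[unfolded S_def] this] obtain F e where Fe: "finite F" "e > 0"
    "\<forall>l. (\<forall>x\<in>F. \<bar>blinfun_apply l x\<bar> < e) \<longrightarrow> l \<in> V" by auto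
  have "blinfun_apply h l = 0" if "\<forall>x\<in>F. blinfun_apply l x = 0" for l
  proof (rule ccontr)
    assume nz: "blinfun_apply h l \<noteq> 0"
    define t where "t = 2 / \<bar>blinfun_apply h l\<bar>"
    have "t *\<^sub>R l \<in> V" using Fe(2,3) that by (auto simp: blinfun.scaleR_left)
    then have "\<bar>t * blinfun_apply h l\<bar> < 1" unfolding V_def by (simp add: blinfun.scaleR_right)
    moreover have "\<bar>t * blinfun_apply h l\<bar> = 2" using nz unfolding t_def by (simp add: abs_mult)
    ultimately show False by simp
  qed
  moreover have "linear (blinfun_apply h)" by (rule bounded_linear.linear[OF blinfun.bounded_linear_right])
  ultimately show ?thesis using ker_span[OF Fe(1)] by blast
qed
theorem theorem4p3:
  fixes f g0 :: "('a::banach \<Rightarrow>\<^sub>L real) \<Rightarrow>\<^sub>L real"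
    and Y Z :: "(('a \<Rightarrow>\<^sub>L real) \<Rightarrow>\<^sub>L real) set"
  assumes "weak_star_continuous f"
    and "subspace Y"
    and "\<forall>g\<in>Y. weak_star_continuous g"
    and "f \<notin> Y"
    and "g0 \<in> Y"
    and "norm (f - g0) = infdist f Y"
    and "subspace Z" and "Z \<subseteq> Y" and "\<exists>B. finite B \<and> Z = span B" and "g0 \<in> Z"
  shows "norm (f - g0) = infdist f Y \<and>
         (let S = {\<bar>blinfun_apply f x\<bar> | x. (\<forall>g\<in>Z. blinfun_apply g x = 0) \<and> norm x = 1}
          in infdist f Y \<in> S \<and> (\<forall>s\<in>S. s \<le> infdist f Y))"
proof -
  note fY = assms(4) and g0Y = assms(5) and nd = assms(6) and sZ = assms(7) and ZY = assms(8)
    and g0Z = assms(10)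
  define d where "d = infdist f Y"
  obtain x0 where fx0: "\<forall>l. blinfun_apply f l = blinfun_apply l x0"
    using wsc_repr[OF assms(1)] by blast
  define \<psi> :: "'a \<Rightarrow> ('a \<Rightarrow>\<^sub>L real) \<Rightarrow>\<^sub>L real" where "\<psi> x = Blinfun (\<lambda>l. blinfun_apply l x)" for x
  have \<psi>a: "blinfun_apply (\<psi> x) l = blinfun_apply l x" for x l
    unfolding \<psi>_def by (simp add: bounded_linear_Blinfun_apply[OF blinfun.bounded_linear_left])
  have \<psi>add: "\<psi> (x + y) = \<psi> x + \<psi> y" for x y
    by (rule blinfun_eqI) (simp add: \<psi>a blinfun.add_right blinfun.add_left)
  have \<psi>sc: "\<psi> (c *\<^sub>R x) = c *\<^sub>R \<psi> x" for c x
    by (rule blinfun_eqI) (simp add: \<psi>a blinfun.scaleR_right blinfun.scaleR_left)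
  have \<psi>0: "\<psi> 0 = 0" by (rule blinfun_eqI) (simp add: \<psi>a)
  have f\<psi>: "f = \<psi> x0" by (rule blinfun_eqI) (simp add: \<psi>a fx0)
  have repr: "\<exists>z. g = \<psi> z" if "g \<in> Z" for g
  proof -
    have "weak_star_continuous g" using that ZY assms(3) by blast
    from wsc_repr[OF this] obtain z where "\<forall>l. blinfun_apply g l = blinfun_apply l z" by blast
    then have "g = \<psi> z" by (intro blinfun_eqI) (simp add: \<psi>a)
    then show ?thesis by blast
  qed
  define p where "p w = norm (\<psi> w)" for w
  have psub: "p (x + y) \<le> p x + p y" for x y unfolding p_def \<psi>add by (rule norm_triangle_ineq)
  have phom: "p (c *\<^sub>R x) = c * p x" if "c \<ge> 0" for c x unfolding p_def \<psi>sc using that by simp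
  have pbound: "p w \<le> norm w" for w
    unfolding p_def
  proof (rule norm_blinfun_bound)
    fix x :: "'a \<Rightarrow>\<^sub>L real"
    show "norm (blinfun_apply (\<psi> w) x) \<le> norm w * norm x"
      using norm_blinfun[of x w] by (simp add: \<psi>a mult.commute)
  qed simp
  define Z0 where "Z0 = {z. \<psi> z \<in> Z}"
  have Z0add: "z1 + z2 \<in> Z0" if "z1 \<in> Z0" "z2 \<in> Z0" for z1 z2
    using that sZ unfolding Z0_def by (simp add: \<psi>add subspace_add)
  have Z0sc: "c *\<^sub>R z \<in> Z0" if "z \<in> Z0" for c z
    using that sZ unfolding Z0_def by (simp add: \<psi>sc subspace_scale)
  have Z00: "0 \<in> Z0" using sZ unfolding Z0_def by (simp add: \<psi>0 subspace_0)
  have d0: "d \<ge> 0" unfolding d_def by (rule infdist_nonneg)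
  have "f \<noteq> g0" using fY g0Y by blast
  then have "norm (f - g0) > 0" by simp
  then have dpos: "d > 0" using nd d_def by simp
  define G0 where "G0 = {(z + t *\<^sub>R x0, t * d) | z t. z \<in> Z0}"
  have lgG0: "lin_graph G0" unfolding lin_graph_def
  proof (intro conjI allI impI)
    fix u a v b assume "(u,a) \<in> G0" "(v,b) \<in> G0"
    then obtain z t z' t' where "z \<in> Z0" "z' \<in> Z0" "u = z + t *\<^sub>R x0" "a = t * d"
      "v = z' + t' *\<^sub>R x0" "b = t' * d" unfolding G0_def by blast
    then show "(u+v, a+b) \<in> G0" unfolding G0_def
      by (intro CollectI exI[of _ "z+z'"] exI[of _ "t+t'"]) (auto simp: algebra_simps Z0add)
  next
    fix u a c assume "(u,a) \<in> G0"
    then obtain z t where "z \<in> Z0" "u = z + t *\<^sub>R x0" "a = t * d" unfolding G0_def by blast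
    then show "(c *\<^sub>R u, c*a) \<in> G0" unfolding G0_def
      by (intro CollectI exI[of _ "c *\<^sub>R z"] exI[of _ "c*t"]) (auto simp: algebra_simps Z0sc)
  qed
  have G00: "(0,0) \<in> G0" unfolding G0_def using Z00 by force
  have domG0: "a \<le> p u" if uG: "(u,a) \<in> G0" for u a
  proof -
    obtain z t where z: "z \<in> Z0" and u: "u = z + t *\<^sub>R x0" and a: "a = t * d"
      using uG unfolding G0_def by blast
    show ?thesis
    proof (cases "t > 0")
      case True
      define g where "g = (- inverse t) *\<^sub>R \<psi> z"
      have "\<psi> z \<in> Z" using z unfolding Z0_def by simp
      then have "g \<in> Y" unfolding g_def using sZ ZY by (meson subsetD subspace_scale)
      then have "d \<le> norm (f - g)" unfolding d_def using infdist_le[of g Y f] by (simp add: dist_norm)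
      then have "t * d \<le> t * norm (f - g)" using True by (simp add: mult_left_mono)
      also have "t * norm (f - g) = norm (t *\<^sub>R (f - g))" using True by simp
      also have "t *\<^sub>R (f - g) = \<psi> u" using True unfolding g_def f\<psi> u
        by (simp add: \<psi>add \<psi>sc algebra_simps)
      finally show ?thesis using a p_def by simp
    next
      case False
      then have "t * d \<le> 0" using d0 by (simp add: mult_nonpos_nonneg)
      then show ?thesis using a norm_ge_zero[of "\<psi> u"] unfolding p_def by linarith
    qed
  qed
  obtain l where l: "linear l" "\<forall>x. l x \<le> p x" "\<forall>x a. (x,a) \<in> G0 \<longrightarrow> l x = a"
    using hb_graph[of p G0, OF psub phom lgG0 G00 domG0] by blast
  have labs: "norm (l w) \<le> norm w * 1" for w
  proof -
    have "l w \<le> norm w" using l(2) pbound order_trans by blast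
    moreover have "- l w \<le> norm w" using l(2)[rule_format, of "- w"] pbound[of "- w"]
      linear_neg[OF l(1), of w] by simp
    ultimately show ?thesis by simp
  qed
  have bl: "bounded_linear l"
    by (rule bounded_linear_intro[OF linear_add[OF l(1)] linear_scale[OF l(1)] labs])
  define L where "L = Blinfun l"
  have La: "blinfun_apply L = l" unfolding L_def using bl by (simp add: bounded_linear_Blinfun_apply)
  have "(x0, d) \<in> G0" unfolding G0_def using Z00
    by (intro CollectI exI[of _ 0] exI[of _ "1::real"]) simp
  then have Lx0: "l x0 = d" using l(3) by blast
  have LZ0: "l z = 0" if zZ: "z \<in> Z0" for z
  proof -
    have "(z, 0) \<in> G0" unfolding G0_def using zZ
      by (intro CollectI exI[of _ z] exI[of _ "0::real"]) simp
    then show ?thesis using l(3) by blast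
  qed
  have LZ: "\<forall>g\<in>Z. blinfun_apply g L = 0"
  proof
    fix g assume "g \<in> Z"
    then obtain z where "g = \<psi> z" using repr by blast
    with \<open>g \<in> Z\<close> show "blinfun_apply g L = 0" using LZ0 by (simp add: \<psi>a La Z0_def)
  qed
  have nL1: "norm L \<le> 1" by (rule norm_blinfun_bound) (use labs in \<open>auto simp: La\<close>)
  obtain z0 where z0: "g0 = \<psi> z0" using repr g0Z by blast
  have "d = blinfun_apply (f - g0) L"
    using Lx0 LZ g0Z by (simp add: blinfun.diff_left fx0 La)
  also have "\<dots> \<le> norm (f - g0) * norm L" using norm_blinfun[of "f - g0" L] by simp
  also have "\<dots> = d * norm L" using nd d_def by simp
  finally have "1 \<le> norm L" using dpos by simp
  with nL1 have nL: "norm L = 1" by simp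
  have fL: "\<bar>blinfun_apply f L\<bar> = d" using Lx0 d0 by (simp add: fx0 La)
  show ?thesis unfolding Let_def
  proof (intro conjI)
    show "norm (f - g0) = infdist f Y" by (rule nd)
    show "infdist f Y \<in> {\<bar>blinfun_apply f x\<bar> | x. (\<forall>g\<in>Z. blinfun_apply g x = 0) \<and> norm x = 1}"
      using fL LZ nL d_def by (intro CollectI exI[of _ L]) simp
    show "\<forall>s\<in>{\<bar>blinfun_apply f x\<bar> | x. (\<forall>g\<in>Z. blinfun_apply g x = 0) \<and> norm x = 1}. s \<le> infdist f Y"
    proof safe
      fix x assume x: "\<forall>g\<in>Z. blinfun_apply g x = 0" "norm x = 1"
      have "\<bar>blinfun_apply f x\<bar> = \<bar>blinfun_apply (f - g0) x\<bar>" using x g0Z by (simp add: blinfun.diff_left)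
      also have "\<dots> \<le> norm (f - g0) * norm x" using norm_blinfun[of "f - g0" x] by simp
      finally show "\<bar>blinfun_apply f x\<bar> \<le> infdist f Y" using x nd by simp
    qed
  qed
qed

end
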